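(* Let $l_0\in\mathbb{N}$, let $\eta=(\eta_l)_{l\ge1}$ be a strictly positive sequence with $0<\sup_{l\ge l_0}\eta_l<1$, and let $S$ and the minimal $S$-majorant $\xi\mapsto\widehat{\xi}$ be as in the context. Then every nonnegative, nonincreasing, bounded sequence $\xi=(\xi_l)_{l\ge1}$ satisfies $$\sum_{l=1}^\infty\xi_l<\infty\iff\sum_{l=1}^\infty\widehat{\xi}_l<\infty .$$
   Context: $S$ is the set of real sequences $\sigma=(\sigma_l)_{l\ge1}$ such that (i) $\sigma_l\ge\sigma_{l+1}\ge0$ for all $l\in\mathbb{N}$, and (ii) $\sigma_l-\sigma_{l+1}\ge\eta_l(\sigma_{l-1}-\sigma_l)$ for all $l\ge l_0$ with $l\ge2$. For a bounded sequence $\xi$, a sequence $\sigma\in S$ is an $S$-majorant of $\xi$ if $\sigma_l\ge\xi_l$ for all $l\ge l_0$, and $\widehat{\xi}$ is the pointwise infimum of all $S$-majorants of $\xi$ (it belongs to $S$ and is the minimal $S$-majorant). *)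

theory Defs
  imports Complex_Main
begin

text \<open>Sequences indexed by l \<ge> 1 are represented as functions nat \<Rightarrow> real;
  the value at index 0 is ignored.\<close>

definition inS :: "nat \<Rightarrow> (nat \<Rightarrow> real) \<Rightarrow> (nat \<Rightarrow> real) \<Rightarrow> bool" where
  "inS l0 \<eta> \<sigma> \<longleftrightarrow>
     (\<forall>l\<ge>1. \<sigma> l \<ge> \<sigma> (Suc l) \<and> \<sigma> (Suc l) \<ge> 0) \<and>
     (\<forall>l. l \<ge> l0 \<and> l \<ge> 2 \<longrightarrow> \<sigma> l - \<sigma> (Suc l) \<ge> \<eta> l * (\<sigma> (l - 1) - \<sigma> l))"

definition S_majorant :: "nat \<Rightarrow> (nat \<Rightarrow> real) \<Rightarrow> (nat \<Rightarrow> real) \<Rightarrow> (nat \<Rightarrow> real) \<Rightarrow> bool" where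
  "S_majorant l0 \<eta> \<xi> \<sigma> \<longleftrightarrow> inS l0 \<eta> \<sigma> \<and> (\<forall>l. l \<ge> l0 \<and> l \<ge> 1 \<longrightarrow> \<sigma> l \<ge> \<xi> l)"

definition min_majorant :: "nat \<Rightarrow> (nat \<Rightarrow> real) \<Rightarrow> (nat \<Rightarrow> real) \<Rightarrow> nat \<Rightarrow> real" where
  "min_majorant l0 \<eta> \<xi> = (\<lambda>l. INF \<sigma>\<in>{\<sigma>. S_majorant l0 \<eta> \<xi> \<sigma>}. \<sigma> l)"

end

theory Submission
  imports Defs
begin

lemma maj_nonneg:
  assumes "inS l0 \<eta> \<sigma>" shows "\<sigma> (Suc l) \<ge> 0"
proof (cases l)
  case 0
  with assms have "\<sigma> 1 \<ge> \<sigma> 2" "\<sigma> 2 \<ge> 0" unfolding inS_def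
    by (metis numeral_2_eq_2 order_refl One_nat_def)+
  with 0 show ?thesis by simp
next
  case (Suc m)
  with assms show ?thesis unfolding inS_def by auto
qed

lemma minmaj_nonneg:
  assumes "S_majorant l0 \<eta> \<xi> \<tau>"
  shows "min_majorant l0 \<eta> \<xi> (Suc l) \<ge> 0"
  unfolding min_majorant_def
  apply (rule cINF_greatest)
  using assms maj_nonneg unfolding S_majorant_def by auto

lemma minmaj_le:
  assumes "S_majorant l0 \<eta> \<xi> \<tau>"
  shows "min_majorant l0 \<eta> \<xi> (Suc l) \<le> \<tau> (Suc l)"
  unfolding min_majorant_def
  apply (rule cINF_lower)
  using assms maj_nonneg unfolding S_majorant_def bdd_below_def
  by (auto intro!: exI[of _ 0])

lemma minmaj_ge:
  assumes "S_majorant l0 \<eta> \<xi> \<tau>" "Suc l \<ge> l0"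
  shows "min_majorant l0 \<eta> \<xi> (Suc l) \<ge> \<xi> (Suc l)"
  unfolding min_majorant_def
  apply (rule cINF_greatest)
  using assms unfolding S_majorant_def by auto

theorem lemma23:
  fixes l0 :: nat and \<eta> \<xi> :: "nat \<Rightarrow> real"
  assumes eta_pos: "\<forall>l\<ge>1. \<eta> l > 0"
    and eta_bdd: "bdd_above {\<eta> l | l. l \<ge> l0 \<and> l \<ge> 1}"
    and eta_sup_pos: "0 < Sup {\<eta> l | l. l \<ge> l0 \<and> l \<ge> 1}"
    and eta_sup_lt1: "Sup {\<eta> l | l. l \<ge> l0 \<and> l \<ge> 1} < 1"
    and xi_nonneg: "\<forall>l\<ge>1. \<xi> l \<ge> 0"
    and xi_noninc: "\<forall>l\<ge>1. \<xi> (Suc l) \<le> \<xi> l"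
    and xi_bdd: "\<exists>B. \<forall>l\<ge>1. \<bar>\<xi> l\<bar> \<le> B"
  shows "summable (\<lambda>l. \<xi> (Suc l)) \<longleftrightarrow> summable (\<lambda>l. min_majorant l0 \<eta> \<xi> (Suc l))"
proof
  define q where "q = Sup {\<eta> l | l. l \<ge> l0 \<and> l \<ge> 1}"
  have q0: "0 < q" and q1: "q < 1" using eta_sup_pos eta_sup_lt1 q_def by auto
  have etaq: "\<eta> l \<le> q" if "l \<ge> l0" "l \<ge> 1" for l
    unfolding q_def by (rule cSup_upper) (use that eta_bdd in auto)
  define \<delta> where "\<delta> m = (if m = 0 then 0 else \<xi> m - \<xi> (Suc m))" for m
  have d0: "\<delta> m \<ge> 0" for m using xi_noninc by (simp add: \<delta>_def)
  define e where "e = rec_nat 0 (\<lambda>m r. \<delta> (Suc m) + q * r)"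
  have e0: "e 0 = 0" and eS: "e (Suc m) = \<delta> (Suc m) + q * e m" for m
    by (simp_all add: e_def)
  have enn: "e m \<ge> 0" for m
    by (induction m) (use q0 d0 in \<open>auto simp: e0 eS\<close>)
  have dsum: "(\<Sum>m<N. \<delta> (Suc m)) = \<xi> 1 - \<xi> (Suc N)" for N
    by (induction N) (auto simp: \<delta>_def)
  have esum: "(\<Sum>m<N. e m) \<le> \<xi> 1 / (1 - q)" for N
  proof -
    have "(\<Sum>m<Suc N. e m) = (\<Sum>m<N. \<delta> (Suc m)) + q * (\<Sum>m<N. e m)"
    proof (induction N)
      case (Suc N)
      have "(\<Sum>m<Suc (Suc N). e m) = e (Suc N) + (\<Sum>m<Suc N. e m)" by simp
      also have "\<dots> = \<delta> (Suc N) + q * e N + ((\<Sum>m<N. \<delta> (Suc m)) + q * (\<Sum>m<N. e m))"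
        using Suc.IH by (simp add: eS)
      also have "\<dots> = (\<Sum>m<Suc N. \<delta> (Suc m)) + q * (\<Sum>m<Suc N. e m)"
        by (simp add: algebra_simps)
      finally show ?case .
    qed (simp add: e0)
    also have "\<dots> \<le> \<xi> 1 + q * (\<Sum>m<Suc N. e m)"
    proof -
      have "\<xi> (Suc N) \<ge> 0" "q * e N \<ge> 0" using xi_nonneg q0 enn by auto
      then show ?thesis using dsum[of N] by (simp add: algebra_simps)
    qed
    finally have "(1 - q) * (\<Sum>m<Suc N. e m) \<le> \<xi> 1" by (simp add: algebra_simps)
    hence "(\<Sum>m<Suc N. e m) \<le> \<xi> 1 / (1 - q)" using q1 by (simp add: field_simps)
    moreover have "(\<Sum>m<N. e m) \<le> (\<Sum>m<Suc N. e m)" using enn by simp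
    ultimately show ?thesis by linarith
  qed
  have esumm: "summable e"
  proof (rule bounded_imp_summable[where B="\<xi> 1 / (1 - q)"])
    fix n show "0 \<le> e n" by (rule enn)
    show "(\<Sum>k\<le>n. e k) \<le> \<xi> 1 / (1 - q)" using esum[of "Suc n"] lessThan_Suc_atMost by metis
  qed
  define \<sigma> where "\<sigma> l = (\<xi> l + q * e (l - 1)) / (1 - q)" for l
  have diff: "\<sigma> l - \<sigma> (Suc l) = e l" if l1: "l \<ge> 1" for l
  proof -
    obtain m where m: "l = Suc m" using l1 by (cases l) auto
    have el: "e l = \<xi> l - \<xi> (Suc l) + q * e m" using m by (simp add: eS \<delta>_def)
    have "\<sigma> l - \<sigma> (Suc l) = ((\<xi> l + q * e m) - (\<xi> (Suc l) + q * e l)) / (1 - q)"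
      unfolding \<sigma>_def m by (simp add: diff_divide_distrib)
    also have "(\<xi> l + q * e m) - (\<xi> (Suc l) + q * e l) = (1 - q) * e l"
      using el by (simp add: algebra_simps)
    finally show ?thesis using q1 by simp
  qed
  have sig_ge: "\<sigma> l \<ge> \<xi> l" if "l \<ge> 1" for l
  proof -
    have "\<xi> l \<le> \<xi> l + q * e (l - 1)" using q0 enn by simp
    also have "\<dots> \<le> (\<xi> l + q * e (l - 1)) / (1 - q)"
    proof -
      have x0: "\<xi> l + q * e (l - 1) \<ge> 0" using q0 enn[of "l-1"] xi_nonneg that by simp
      have "1 * (\<xi> l + q * e (l - 1)) \<le> (1 / (1 - q)) * (\<xi> l + q * e (l - 1))"
        using q0 q1 x0 by (intro mult_right_mono) auto
      then show ?thesis by simp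
    qed
    finally show ?thesis unfolding \<sigma>_def .
  qed
  have inS: "inS l0 \<eta> \<sigma>"
    unfolding inS_def
  proof (intro conjI allI impI)
    fix l :: nat assume "1 \<le> l"
    then show "\<sigma> (Suc l) \<le> \<sigma> l" using diff[of l] enn[of l] by simp
    have "0 \<le> \<xi> (Suc l)" using xi_nonneg by simp
    then show "0 \<le> \<sigma> (Suc l)" using sig_ge[of "Suc l"] by linarith
  next
    fix l :: nat assume l: "l0 \<le> l \<and> 2 \<le> l"
    obtain m where m0: "l = Suc m" using l by (cases l) auto
    have m: "l = Suc m" "m \<ge> 1" using m0 l by auto
    have "\<eta> l * e m \<le> q * e m" using etaq[of l] l enn by (intro mult_right_mono) auto
    also have "\<dots> \<le> e l" using m d0 by (simp add: eS)
    finally show "\<eta> l * (\<sigma> (l - 1) - \<sigma> l) \<le> \<sigma> l - \<sigma> (Suc l)"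
      using diff[of l] diff[of m] m by simp
  qed
  have maj: "S_majorant l0 \<eta> \<xi> \<sigma>" using inS sig_ge by (simp add: S_majorant_def)
  assume sx: "summable (\<lambda>l. \<xi> (Suc l))"
  have "summable (\<lambda>l. \<sigma> (Suc l))"
    unfolding \<sigma>_def using sx esumm
    by (intro summable_divide summable_add summable_mult) auto
  then show "summable (\<lambda>l. min_majorant l0 \<eta> \<xi> (Suc l))"
  proof (rule summable_comparison_test'[where N=0])
    fix n :: nat
    have a: "0 \<le> min_majorant l0 \<eta> \<xi> (Suc n)" by (rule minmaj_nonneg[OF maj])
    have b: "min_majorant l0 \<eta> \<xi> (Suc n) \<le> \<sigma> (Suc n)" by (rule minmaj_le[OF maj])
    show "norm (min_majorant l0 \<eta> \<xi> (Suc n)) \<le> \<sigma> (Suc n)"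
      using a b by (simp only: real_norm_def abs_of_nonneg)
  qed
next
  obtain B where B: "\<forall>l\<ge>1. \<bar>\<xi> l\<bar> \<le> B" using xi_bdd by auto
  have "B \<ge> 0" using B[rule_format, of 1] by simp
  hence maj: "S_majorant l0 \<eta> \<xi> (\<lambda>_. B)" using B
    unfolding S_majorant_def inS_def by auto
  assume s: "summable (\<lambda>l. min_majorant l0 \<eta> \<xi> (Suc l))"
  show "summable (\<lambda>l. \<xi> (Suc l))"
    apply (rule summable_comparison_test'[where N=l0, OF s])
    using minmaj_ge[OF maj] xi_nonneg by auto
qed

end
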